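(* On every nondegenerate TNECP instance (and for every choice of $j^\star\in[n]$), the tropical Lemke--Howson algorithm terminates after a finite number of iterations with a fully labeled tropical basis $B$ distinct from $[n]\times\{\text{blue}\}$.
   Context: $\mathbb{T}=\mathbb{R}\cup\{-\infty\}$ with $\oplus=\max$, $\odot=+$. A TNECP instance is $M\in\mathbb{T}^{n\times n}$, $q\in\mathbb{T}^n$ with no all-$(-\infty)$ column in $M$ and no $-\infty$ entry in $q$; it is nondegenerate if for each $j\in[n]$ the minimum $\min_k(q_k-M_{kj})$ is attained by exactly one $k$ (convention $a-(-\infty)=+\infty$). Write $w\oplus M\odot z=q$ as $A\odot x=q$ with columns indexed by $[n]\uplus[n]:=([n]\times\{\text{blue}\})\cup([n]\times\{\text{red}\})$: column $(i,\text{blue})$ has $0$ in row $i$ and $-\infty$ elsewhere; column $(j,\text{red})$ is column $j$ of $M$. A tropical basis of $A\odot x=b$ ($A\in\mathbb{T}^{n\times d}$) is a set $B$ of $n$ column indices with a bijection $\phi:[n]\to B$ such that for each $i$, $b_i-A_{i\phi(i)}\in\mathbb{T}$ is minimal among $b_k-A_{k\phi(i)}$, $k\in[n]$. The label of $(k,c)$ is $k$; $(k,\text{blue})$ and $(k,\text{red})$ are twins; a basis is fully labeled if every label of $[n]$ appears in it. Tropical Lemke--Howson algorithm with parameter $j^\star\in[n]$: $B\leftarrow[n]\times\{\text{blue}\}$, $\gamma\leftarrow(j^\star,\text{red})$; loop: $B'\leftarrow$ the unique tropical basis contained in $B\cup\{\gamma\}$ and different from $B$; $\gamma\leftarrow$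 twin of the unique element of $B\setminus B'$; $B\leftarrow B'$; if $B$ is fully labeled, stop. *)

theory Defs
  imports "HOL-Library.Extended_Real"
begin

text \<open>Tropical numbers T = R \<union> {-\<infinity>} are modelled as ereal values different from +\<infinity>.
  Indices [n] are {0..<n}.\<close>

datatype color = Blue | Red

type_synonym col = "nat \<times> color"

definition tnecp_instance :: "nat \<Rightarrow> (nat \<Rightarrow> nat \<Rightarrow> ereal) \<Rightarrow> (nat \<Rightarrow> real) \<Rightarrow> bool" where
  "tnecp_instance n M q \<longleftrightarrow>
     (\<forall>k<n. \<forall>j<n. M k j \<noteq> \<infinity>) \<and> (\<forall>j<n. \<exists>k<n. M k j \<noteq> -\<infinity>)"

text \<open>q has real (finite) entries by its type. Note ereal (q k) - (-\<infinity>) = \<infinity>.\<close>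

definition nondegenerate :: "nat \<Rightarrow> (nat \<Rightarrow> nat \<Rightarrow> ereal) \<Rightarrow> (nat \<Rightarrow> real) \<Rightarrow> bool" where
  "nondegenerate n M q \<longleftrightarrow>
     (\<forall>j<n. \<exists>!k. k < n \<and> (\<forall>k'<n. ereal (q k) - M k j \<le> ereal (q k') - M k' j))"

text \<open>Entry of the matrix A = [I | M] in row k and column c.\<close>
fun colA :: "(nat \<Rightarrow> nat \<Rightarrow> ereal) \<Rightarrow> col \<Rightarrow> nat \<Rightarrow> ereal" where
  "colA M (i, Blue) k = (if k = i then 0 else -\<infinity>)"
| "colA M (j, Red) k = M k j"

definition tropical_basis :: "nat \<Rightarrow> (nat \<Rightarrow> nat \<Rightarrow> ereal) \<Rightarrow> (nat \<Rightarrow> real) \<Rightarrow> col set \<Rightarrow> bool" where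
  "tropical_basis n M q B \<longleftrightarrow>
     B \<subseteq> {0..<n} \<times> UNIV \<and>
     (\<exists>\<phi>. bij_betw \<phi> {0..<n} B \<and>
        (\<forall>i<n. ereal (q i) - colA M (\<phi> i) i \<noteq> \<infinity> \<and>
               (\<forall>k<n. ereal (q i) - colA M (\<phi> i) i \<le> ereal (q k) - colA M (\<phi> i) k)))"

definition label :: "col \<Rightarrow> nat" where "label c = fst c"

fun twin :: "col \<Rightarrow> col" where
  "twin (k, Blue) = (k, Red)"
| "twin (k, Red) = (k, Blue)"

definition fully_labeled :: "nat \<Rightarrow> col set \<Rightarrow> bool" where
  "fully_labeled n B \<longleftrightarrow> {0..<n} \<subseteq> label ` B"

definition all_blue :: "nat \<Rightarrow> col set" where
  "all_blue n = {0..<n} \<times> {Blue}"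

definition lh_step :: "nat \<Rightarrow> (nat \<Rightarrow> nat \<Rightarrow> ereal) \<Rightarrow> (nat \<Rightarrow> real) \<Rightarrow>
    col set \<times> col \<Rightarrow> col set \<times> col \<Rightarrow> bool" where
  "lh_step n M q s s' \<longleftrightarrow>
     (let B = fst s; \<gamma> = snd s; B' = fst s'; \<gamma>' = snd s' in
       (\<exists>!C. tropical_basis n M q C \<and> C \<subseteq> insert \<gamma> B \<and> C \<noteq> B) \<and>
       tropical_basis n M q B' \<and> B' \<subseteq> insert \<gamma> B \<and> B' \<noteq> B \<and>
       (\<exists>e. B - B' = {e} \<and> \<gamma>' = twin e))"

end

theory Submission
  imports Defs
begin

lemma ereal_minus_fin: "(x::ereal) \<noteq> \<infinity> \<Longrightarrow> x \<noteq> -\<infinity> \<Longrightarrow> ereal a - x \<noteq> \<infinity>"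
  by (cases x) auto

lemma color_UNIV: "(UNIV::color set) = {Blue, Red}" using color.exhaust by auto

lemma twin_ne: "twin c \<noteq> c" by (cases c; cases "snd c") auto
lemma twin_twin: "twin (twin c) = c" by (cases c; cases "snd c") auto
lemma fst_twin: "fst (twin c) = fst c" by (cases c; cases "snd c") auto

locale lh =
  fixes n :: nat and M :: "nat \<Rightarrow> nat \<Rightarrow> ereal" and q :: "nat \<Rightarrow> real" and js :: nat
  assumes inst: "tnecp_instance n M q" and nd: "nondegenerate n M q" and js: "js < n"
begin

definition good where
  "good i c \<longleftrightarrow> ereal (q i) - colA M c i \<noteq> \<infinity> \<and>
     (\<forall>k<n. ereal (q i) - colA M c i \<le> ereal (q k) - colA M c k)"

definition cols :: "col set" where "cols = {0..<n} \<times> UNIV"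

lemma cols_iff: "c \<in> cols \<longleftrightarrow> fst c < n" unfolding cols_def by (cases c) auto

lemma finite_cols: "finite cols" unfolding cols_def by (rule finite_SigmaI) (auto simp: color_UNIV)

lemma ex1_good: assumes "c \<in> cols" shows "\<exists>!i. i<n \<and> good i c"
proof -
  obtain j cl where c: "c = (j, cl)" and j: "j < n" using assms unfolding cols_def by auto
  show ?thesis
  proof (cases cl)
    case Blue
    have "good j c" unfolding good_def c Blue by auto
    moreover have "i = j" if "good i c" for i using that unfolding good_def c Blue
      by (auto split: if_splits)
    ultimately show ?thesis using j by blast
  next
    case Red
    obtain k0 where k0: "k0 < n" "M k0 j \<noteq> -\<infinity>" using inst j unfolding tnecp_instance_def by auto
    have fin: "ereal (q k0) - M k0 j \<noteq> \<infinity>"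
      using ereal_minus_fin[of "M k0 j"] k0 inst j unfolding tnecp_instance_def by auto
    have P: "\<exists>!k. k < n \<and> (\<forall>k'<n. ereal (q k) - M k j \<le> ereal (q k') - M k' j)"
      using nd j unfolding nondegenerate_def by auto
    have eq: "good i c \<longleftrightarrow> (\<forall>k'<n. ereal (q i) - M i j \<le> ereal (q k') - M k' j)" for i
    proof
      assume "\<forall>k'<n. ereal (q i) - M i j \<le> ereal (q k') - M k' j"
      then have "ereal (q i) - M i j \<le> ereal (q k0) - M k0 j" using k0 by auto
      then have "ereal (q i) - M i j \<noteq> \<infinity>" using fin by auto
      then show "good i c" unfolding good_def c Red
        using \<open>\<forall>k'<n. ereal (q i) - M i j \<le> ereal (q k') - M k' j\<close> by auto
    qed (auto simp: good_def c Red)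
    show ?thesis using P unfolding eq .
  qed
qed

definition r :: "col \<Rightarrow> nat" where "r c = (THE i. i<n \<and> good i c)"

lemma r: "c \<in> cols \<Longrightarrow> r c < n \<and> good (r c) c"
  unfolding r_def using theI'[OF ex1_good] by blast

lemma r_unique: "c \<in> cols \<Longrightarrow> i < n \<Longrightarrow> good i c \<Longrightarrow> r c = i"
  using r ex1_good by blast

lemma r_blue: "i < n \<Longrightarrow> r (i, Blue) = i"
  by (rule r_unique) (auto simp: cols_def good_def)

abbreviation basis where "basis B \<equiv> tropical_basis n M q B"

lemma basis_iff: "basis B \<longleftrightarrow> B \<subseteq> cols \<and> inj_on r B \<and> {0..<n} \<subseteq> r ` B"
proof
  assume "basis B"
  then obtain \<phi> where B: "B \<subseteq> cols" and bij: "bij_betw \<phi> {0..<n} B"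
    and g: "\<forall>i<n. good i (\<phi> i)"
    unfolding tropical_basis_def good_def cols_def by blast
  have rphi: "r (\<phi> i) = i" if "i < n" for i
  proof -
    have "\<phi> i \<in> B" using bij that unfolding bij_betw_def by auto
    then show ?thesis using r_unique[of "\<phi> i" i] g that B by auto
  qed
  have "inj_on r B"
  proof
    fix x y assume "x \<in> B" "y \<in> B" "r x = r y"
    then obtain i j where "i < n" "j < n" "x = \<phi> i" "y = \<phi> j"
      using bij unfolding bij_betw_def by auto
    then show "x = y" using rphi \<open>r x = r y\<close> by auto
  qed
  moreover have "{0..<n} \<subseteq> r ` B"
  proof
    fix i assume "i \<in> {0..<n}"
    then have "\<phi> i \<in> B" "r (\<phi> i) = i" using bij rphi unfolding bij_betw_def by auto
    then show "i \<in> r ` B" by force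
  qed
  ultimately show "B \<subseteq> cols \<and> inj_on r B \<and> {0..<n} \<subseteq> r ` B" using B by blast
next
  assume A: "B \<subseteq> cols \<and> inj_on r B \<and> {0..<n} \<subseteq> r ` B"
  have rB: "r ` B = {0..<n}" using A r by fastforce
  have bij: "bij_betw r B {0..<n}" using A rB unfolding bij_betw_def by auto
  define \<phi> where "\<phi> = inv_into B r"
  have b2: "bij_betw \<phi> {0..<n} B" unfolding \<phi>_def by (rule bij_betw_inv_into[OF bij])
  have "good i (\<phi> i)" if "i < n" for i
  proof -
    have "\<phi> i \<in> B" "r (\<phi> i) = i" using that rB unfolding \<phi>_def
      by (auto intro: inv_into_into f_inv_into_f)
    then show ?thesis using r[of "\<phi> i"] A by auto
  qed
  then show "basis B" unfolding tropical_basis_def using b2 A unfolding good_def cols_def by blast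
qed

lemma basis_card: "basis B \<Longrightarrow> finite B \<and> card B = n"
proof -
  assume "basis B"
  then have "B \<subseteq> cols" "inj_on r B" "{0..<n} \<subseteq> r ` B" using basis_iff by auto
  moreover have "r ` B \<subseteq> {0..<n}" using r \<open>B \<subseteq> cols\<close> by auto
  ultimately have "r ` B = {0..<n}" by auto
  moreover have "finite B" using finite_cols \<open>B \<subseteq> cols\<close> finite_subset by auto
  ultimately show ?thesis using card_image[OF \<open>inj_on r B\<close>] by auto
qed

definition ee where "ee B \<gamma> = (THE c. c \<in> B \<and> r c = r \<gamma>)"

lemma ee: assumes "basis B" "\<gamma> \<in> cols" shows "ee B \<gamma> \<in> B \<and> r (ee B \<gamma>) = r \<gamma>"
proof -
  have "r \<gamma> < n" using r assms(2) by blast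
  then have "\<exists>!c. c \<in> B \<and> r c = r \<gamma>"
    using assms unfolding basis_iff inj_on_def by force
  then show ?thesis unfolding ee_def by (rule theI')
qed

lemma ee_eq: assumes "basis B" "\<gamma> \<in> cols" "c \<in> B" "r c = r \<gamma>" shows "ee B \<gamma> = c"
  using ee[OF assms(1,2)] assms unfolding basis_iff inj_on_def by metis

definition piv where "piv B \<gamma> = insert \<gamma> (B - {ee B \<gamma>})"

definition valid where "valid s \<longleftrightarrow> basis (fst s) \<and> snd s \<in> cols \<and> snd s \<notin> fst s"

lemma piv_basis: assumes "basis B" "\<gamma> \<in> cols" "\<gamma> \<notin> B" shows "basis (piv B \<gamma>)"
proof -
  let ?e = "ee B \<gamma>"
  have e: "?e \<in> B" "r ?e = r \<gamma>" using ee[OF assms(1,2)] by auto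
  have B: "B \<subseteq> cols" "inj_on r B" "{0..<n} \<subseteq> r ` B" using assms basis_iff by auto
  have "r \<gamma> \<notin> r ` (B - {?e})" using B(2) e unfolding inj_on_def by auto
  then have i: "inj_on r (piv B \<gamma>)" unfolding piv_def using B(2) inj_on_diff by auto
  have "r \<gamma> \<in> r ` B" using e by (metis imageI)
  then have "r ` piv B \<gamma> = r ` B" unfolding piv_def using e by auto
  moreover note i
  moreover have "piv B \<gamma> \<subseteq> cols" unfolding piv_def using B assms by auto
  ultimately show ?thesis using B basis_iff by auto
qed

lemma piv_unique: assumes "basis B" "\<gamma> \<in> cols" "\<gamma> \<notin> B" "basis C" "C \<subseteq> insert \<gamma> B" "C \<noteq> B"
  shows "C = piv B \<gamma>"
proof -
  let ?e = "ee B \<gamma>"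
  have e: "?e \<in> B" "r ?e = r \<gamma>" using ee[OF assms(1,2)] by auto
  have B: "B \<subseteq> cols" "inj_on r B" "{0..<n} \<subseteq> r ` B" using assms basis_iff by auto
  have C: "C \<subseteq> cols" "inj_on r C" "{0..<n} \<subseteq> r ` C" using assms basis_iff by auto
  have rB: "r x < n" if "x \<in> B" for x using r[of x] B(1) that by blast
  have gC: "\<gamma> \<in> C"
  proof (rule ccontr)
    assume "\<gamma> \<notin> C"
    then have CB: "C \<subseteq> B" using assms(5) by auto
    have "B \<subseteq> C"
    proof
      fix x assume "x \<in> B"
      have "r x \<in> r ` C" using C(3) rB[OF \<open>x \<in> B\<close>] by auto
      then obtain y where "y \<in> C" "r y = r x" by auto
      then show "x \<in> C" using B(2) CB \<open>x \<in> B\<close> unfolding inj_on_def by auto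
    qed
    then show False using CB assms(6) by auto
  qed
  have "?e \<noteq> \<gamma>" using e assms(3) by auto
  then have "?e \<notin> C" using C(2) gC e unfolding inj_on_def by auto
  then have "C \<subseteq> piv B \<gamma>" using assms(5) unfolding piv_def by auto
  moreover have "piv B \<gamma> \<subseteq> C"
  proof
    fix x assume x: "x \<in> piv B \<gamma>"
    show "x \<in> C"
    proof (cases "x = \<gamma>")
      case True then show ?thesis using gC by simp
    next
      case False
      then have xB: "x \<in> B" "x \<noteq> ?e" using x unfolding piv_def by auto
      have "r x \<in> r ` C" using C(3) rB[OF \<open>x \<in> B\<close>] by auto
      then obtain y where y: "y \<in> C" "r y = r x" by auto
      have "y \<noteq> \<gamma>"
      proof
        assume "y = \<gamma>"
        then have "r x = r ?e" using y e by simp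
        then show False using B(2) xB e unfolding inj_on_def by auto
      qed
      then have "y \<in> B" using y assms(5) by auto
      then show ?thesis using B(2) xB y unfolding inj_on_def by auto
    qed
  qed
  ultimately show ?thesis by auto
qed

definition nxt :: "col set \<times> col \<Rightarrow> col set \<times> col" where
  "nxt s = (piv (fst s) (snd s), twin (ee (fst s) (snd s)))"
definition R :: "col set \<times> col \<Rightarrow> col set \<times> col" where
  "R s = (piv (fst s) (snd s), ee (fst s) (snd s))"
definition tw :: "col set \<times> col \<Rightarrow> col set \<times> col" where
  "tw s = (fst s, twin (snd s))"

lemma nxt_tw: "nxt s = tw (R s)" unfolding nxt_def tw_def R_def by simp
lemma tw_tw: "tw (tw s) = s" unfolding tw_def by (simp add: twin_twin)

lemma R_valid: assumes "valid s" shows "valid (R s) \<and> R (R s) = s"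
proof -
  obtain B \<gamma> where s: "s = (B, \<gamma>)" by (cases s)
  let ?e = "ee B \<gamma>"
  have a: "basis B" "\<gamma> \<in> cols" "\<gamma> \<notin> B" using assms s valid_def by auto
  have e: "?e \<in> B" "r ?e = r \<gamma>" using ee[OF a(1,2)] by auto
  have ne: "?e \<noteq> \<gamma>" using e a by auto
  have Bc: "B \<subseteq> cols" using a basis_iff by auto
  have v: "valid (R s)" unfolding valid_def R_def s using piv_basis[OF a] e ne Bc
    by (auto simp: piv_def)
  have b': "basis (piv B \<gamma>)" using piv_basis[OF a] .
  have "ee (piv B \<gamma>) ?e = \<gamma>"
    by (rule ee_eq[OF b']) (use e Bc in \<open>auto simp: piv_def\<close>)
  moreover have "insert ?e (insert \<gamma> (B - {?e}) - {\<gamma>}) = B" using e a ne by auto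
  ultimately show ?thesis using v unfolding R_def s by (simp add: piv_def)
qed

lemma nxt_inj: assumes "valid x" "valid y" "nxt x = nxt y" shows "x = y"
proof -
  have "R x = R y" using assms(3) unfolding nxt_tw by (metis tw_tw)
  then show ?thesis using R_valid assms by metis
qed

lemma R_fst: "valid s \<Longrightarrow> fst (R s) \<noteq> fst s"
  unfolding valid_def R_def piv_def by auto

lemma lh_step_valid: assumes "valid s" shows "lh_step n M q s (nxt s)"
proof -
  obtain B \<gamma> where s: "s = (B, \<gamma>)" by (cases s)
  have a: "basis B" "\<gamma> \<in> cols" "\<gamma> \<notin> B" using assms s valid_def by auto
  have e: "ee B \<gamma> \<in> B" "ee B \<gamma> \<noteq> \<gamma>" using ee[OF a(1,2)] a(3) by auto
  have "\<exists>!C. basis C \<and> C \<subseteq> insert \<gamma> B \<and> C \<noteq> B"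
    apply (rule ex1I[of _ "piv B \<gamma>"])
    using piv_basis[OF a] piv_unique[OF a] a unfolding piv_def by auto
  moreover have "B - piv B \<gamma> = {ee B \<gamma>}" using e unfolding piv_def by auto
  ultimately show ?thesis unfolding lh_step_def s nxt_def Let_def
    using piv_basis[OF a] a unfolding piv_def by auto
qed

definition Inv where
  "Inv s \<longleftrightarrow> valid s \<and> (js, Blue) \<in> fst s \<and> (js, Red) \<in> fst s \<and> fst (snd s) \<noteq> js \<and>
     label ` fst s = {0..<n} - {fst (snd s)}"

lemma Inv_not_fl: "Inv s \<Longrightarrow> \<not> fully_labeled n (fst s)"
  unfolding Inv_def fully_labeled_def valid_def cols_def by auto

lemma Inv_step: assumes "Inv s"
  shows "Inv (nxt s) \<or> (fst (ee (fst s) (snd s)) = js \<and> fully_labeled n (fst (nxt s)))"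
proof -
  obtain B \<gamma> where s: "s = (B, \<gamma>)" by (cases s)
  let ?e = "ee B \<gamma>"
  let ?m = "fst \<gamma>"
  have v: "valid s" and a: "basis B" "\<gamma> \<in> cols" "\<gamma> \<notin> B" and jb: "(js, Blue) \<in> B"
    and jr: "(js, Red) \<in> B" and mj: "?m \<noteq> js" and lab: "label ` B = {0..<n} - {?m}"
    using assms s unfolding Inv_def valid_def by auto
  have m: "?m < n" using a(2) cols_def by auto
  have e: "?e \<in> B" "?e \<noteq> \<gamma>" using ee[OF a(1,2)] a(3) by auto
  have Bc: "B \<subseteq> cols" using a basis_iff by auto
  have cB: "finite B" "card B = n" using basis_card a by auto
  define B0 where "B0 = B - {(js, Red)}"
  have js0: "js \<in> label ` B0" using jb unfolding B0_def label_def by force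
  have "B = insert (js, Red) B0" using jr B0_def by auto
  then have "label ` B = insert js (label ` B0)" by (simp add: label_def)
  then have "label ` B0 = label ` B" using js0 by auto
  moreover have "card B0 = n - 1" unfolding B0_def using cB jr by auto
  moreover have "card (label ` B) = n - 1" using lab m by auto
  ultimately have injB0: "inj_on label B0" using cB unfolding B0_def
    by (intro eq_card_imp_inj_on) auto
  have uniq: "x = y" if "x \<in> B" "y \<in> B" "fst x = fst y" "fst x \<noteq> js" for x y
  proof -
    have "x \<in> B0" "y \<in> B0" using that unfolding B0_def by auto
    then show ?thesis using injB0 that unfolding inj_on_def label_def by auto
  qed
  have lmB: "?m \<notin> label ` B" using lab by auto
  show ?thesis
  proof (cases "fst ?e = js")
    case True
    have "{0..<n} \<subseteq> label ` piv B \<gamma>"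
    proof
      fix k assume k: "k \<in> {0..<n}"
      show "k \<in> label ` piv B \<gamma>"
      proof (cases "k = ?m")
        case True then show ?thesis unfolding piv_def label_def by auto
      next
        case False
        show ?thesis
        proof (cases "k = js")
          case True
          have "(js, Blue) \<noteq> (js, Red)" by simp
          then have "(js, Blue) \<in> piv B \<gamma> \<or> (js, Red) \<in> piv B \<gamma>"
            using jb jr unfolding piv_def by (metis Diff_iff insertCI singletonD)
          then show ?thesis using True unfolding label_def by force
        next
          case False
          have "k \<in> label ` B" using lab k \<open>k \<noteq> ?m\<close> by auto
          then obtain x where "x \<in> B" "fst x = k" unfolding label_def by auto
          moreover then have "x \<noteq> ?e" using \<open>fst ?e = js\<close> False by auto
          ultimately show ?thesis unfolding piv_def label_def by force
        qed
      qed
    qed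
    then show ?thesis using True s unfolding fully_labeled_def nxt_def by auto
  next
    case False
    let ?k = "fst ?e"
    have twB: "twin ?e \<notin> B" using uniq[of ?e "twin ?e"] e False twin_ne fst_twin by metis
    have km: "?k \<noteq> ?m" using e(1) lmB unfolding label_def by (metis imageI)
    have "?e \<in> cols" using e(1) Bc by blast
    then have "twin ?e \<in> cols" using fst_twin[of ?e] by (simp add: cols_iff)
    moreover have "twin ?e \<noteq> \<gamma>" using km fst_twin[of ?e] by metis
    ultimately have vn: "valid (nxt s)" using piv_basis[OF a] twB
      unfolding valid_def nxt_def s piv_def by simp
    have "label ` piv B \<gamma> = {0..<n} - {?k}"
    proof -
      have "label ` (B - {?e}) = label ` B - {?k}"
      proof
        show "label ` (B - {?e}) \<subseteq> label ` B - {?k}"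
        proof
          fix l assume "l \<in> label ` (B - {?e})"
          then obtain x where x: "x \<in> B" "x \<noteq> ?e" "l = fst x" unfolding label_def by auto
          have "fst x \<noteq> ?k" using uniq[of x ?e] x e(1) False by auto
          then show "l \<in> label ` B - {?k}" using x unfolding label_def by auto
        qed
      next
        show "label ` B - {?k} \<subseteq> label ` (B - {?e})" unfolding label_def by auto
      qed
      moreover have "label ` piv B \<gamma> = insert ?m (label ` (B - {?e}))"
        unfolding piv_def by (simp add: label_def)
      ultimately show ?thesis using lab km m by auto
    qed
    moreover have "(js, Blue) \<in> piv B \<gamma>" "(js, Red) \<in> piv B \<gamma>"
    proof -
      have "(js, Blue) \<noteq> ?e" "(js, Red) \<noteq> ?e" using False by (metis fst_conv)+
      then show "(js, Blue) \<in> piv B \<gamma>" "(js, Red) \<in> piv B \<gamma>"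
        using jb jr unfolding piv_def by auto
    qed
    ultimately have "Inv (nxt s)" using vn False unfolding Inv_def nxt_def s
      by (simp add: fst_twin)
    then show ?thesis by simp
  qed
qed

lemma all_blue_basis: "basis (all_blue n)"
proof -
  have "all_blue n \<subseteq> cols" unfolding all_blue_def cols_def by auto
  moreover have "inj_on r (all_blue n)" unfolding inj_on_def all_blue_def using r_blue by auto
  moreover have "{0..<n} \<subseteq> r ` all_blue n"
  proof
    fix i assume "i \<in> {0..<n}"
    then have "(i, Blue) \<in> all_blue n" "r (i, Blue) = i" using r_blue unfolding all_blue_def by auto
    then show "i \<in> r ` all_blue n" by (metis imageI)
  qed
  ultimately show ?thesis using basis_iff by auto
qed

lemma main:
  "\<exists>(N::nat) (s :: nat \<Rightarrow> col set \<times> col).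
           0 < N \<and>
           s 0 = (all_blue n, (js, Red)) \<and>
           (\<forall>t<N. lh_step n M q (s t) (s (Suc t))) \<and>
           (\<forall>t. 0 < t \<and> t < N \<longrightarrow> \<not> fully_labeled n (fst (s t))) \<and>
           fully_labeled n (fst (s N)) \<and>
           tropical_basis n M q (fst (s N)) \<and>
           fst (s N) \<noteq> all_blue n"
proof -
  define s0 where "s0 = (all_blue n, (js, Red))"
  define s where "s t = (nxt ^^ t) s0" for t
  have s_Suc: "s (Suc t) = nxt (s t)" for t by (simp add: s_def)
  have s_0: "s 0 = s0" by (simp add: s_def)
  have ab: "basis (all_blue n)" by (rule all_blue_basis)
  have jrc: "(js, Red) \<in> cols" using js cols_iff by auto
  have v0: "valid s0" unfolding valid_def s0_def using ab jrc by (auto simp: all_blue_def)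
  define i0 where "i0 = r (js, Red)"
  have i0: "i0 < n" using r[OF jrc] i0_def by auto
  have e0: "ee (all_blue n) (js, Red) = (i0, Blue)"
    by (rule ee_eq[OF ab jrc]) (use i0 r_blue i0_def in \<open>auto simp: all_blue_def\<close>)
  define B1 where "B1 = insert (js, Red) (all_blue n - {(i0, Blue)})"
  have s1: "s 1 = (B1, (i0, Red))"
    using s_Suc[of 0] s_0 e0 unfolding nxt_def s0_def B1_def piv_def by simp
  have bB1: "basis B1" using piv_basis[OF ab jrc] e0 v0 unfolding B1_def piv_def valid_def s0_def
    by simp
  have first: "Inv (s 1) \<or> (fully_labeled n B1 \<and> B1 \<noteq> all_blue n)"
  proof (cases "i0 = js")
    case True
    have "fully_labeled n B1" unfolding fully_labeled_def B1_def
    proof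
      fix k assume k: "k \<in> {0..<n}"
      show "k \<in> label ` insert (js, Red) (all_blue n - {(i0, Blue)})"
      proof (cases "k = js")
        case True then show ?thesis by (simp add: label_def)
      next
        case False
        then have "(k, Blue) \<in> all_blue n - {(i0, Blue)}" using k \<open>i0 = js\<close> by (auto simp: all_blue_def)
        then show ?thesis unfolding label_def by force
      qed
    qed
    moreover have "B1 \<noteq> all_blue n" unfolding B1_def all_blue_def by auto
    ultimately show ?thesis by simp
  next
    case False
    have "valid (s 1)" unfolding s1 valid_def using bB1 i0 False
      by (auto simp: B1_def all_blue_def cols_iff)
    moreover have "(js, Blue) \<in> B1" "(js, Red) \<in> B1" using False js
      by (auto simp: B1_def all_blue_def)
    moreover have "label ` B1 = {0..<n} - {i0}"
    proof
      show "label ` B1 \<subseteq> {0..<n} - {i0}" using js False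
        by (auto simp: B1_def all_blue_def label_def)
      show "{0..<n} - {i0} \<subseteq> label ` B1"
      proof
        fix k assume k: "k \<in> {0..<n} - {i0}"
        then have "(k, Blue) \<in> B1" by (auto simp: B1_def all_blue_def)
        then show "k \<in> label ` B1" unfolding label_def by force
      qed
    qed
    ultimately show ?thesis unfolding Inv_def s1 using False by simp
  qed
  have ex: "\<exists>t. 1 \<le> t \<and> \<not> Inv (s t)"
  proof (rule ccontr)
    assume "\<not> ?thesis"
    then have I: "Inv (s t)" if "1 \<le> t" for t using that by blast
    have V: "valid (s t)" for t
    proof (cases t)
      case 0 then show ?thesis using v0 s_0 by simp
    next
      case (Suc t') then show ?thesis using I[of t] Inv_def by simp
    qed
    have ne0: "s t \<noteq> s0" if "1 \<le> t" for t
      using I[OF that] unfolding Inv_def s0_def all_blue_def by auto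
    have neq: "\<forall>b. a < b \<longrightarrow> s a \<noteq> s b" for a
    proof (induction a)
      case 0 then show ?case using ne0 s_0 by (metis less_eq_Suc_le One_nat_def)
    next
      case (Suc a)
      show ?case
      proof (intro allI impI)
        fix b assume "Suc a < b"
        then obtain b' where b: "b = Suc b'" "a < b'" by (cases b) auto
        show "s (Suc a) \<noteq> s b"
        proof
          assume "s (Suc a) = s b"
          then have "nxt (s a) = nxt (s b')" using b s_Suc by simp
          then have "s a = s b'" using nxt_inj V by blast
          then show False using Suc.IH b by blast
        qed
      qed
    qed
    have "inj s" unfolding inj_on_def by (metis neq linorder_neqE_nat)
    moreover have "range s \<subseteq> Pow cols \<times> cols"
    proof
      fix x assume "x \<in> range s"
      then obtain t where x: "x = s t" by auto
      have "fst x \<subseteq> cols" "snd x \<in> cols" using V[of t] unfolding x valid_def basis_iff by auto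
      then show "x \<in> Pow cols \<times> cols" by (simp add: mem_Times_iff)
    qed
    then have "finite (range s)" using finite_cols finite_subset by blast
    ultimately have "finite (UNIV :: nat set)" using finite_imageD by blast
    then show False by simp
  qed
  define N where "N = (LEAST t. 1 \<le> t \<and> \<not> Inv (s t))"
  have N: "1 \<le> N" "\<not> Inv (s N)" using LeastI_ex[OF ex] unfolding N_def by auto
  have below: "Inv (s t)" if "1 \<le> t" "t < N" for t
    using not_less_Least[of t "\<lambda>t. 1 \<le> t \<and> \<not> Inv (s t)"] that unfolding N_def by auto
  have Vb: "valid (s t)" if "t < N" for t
  proof (cases t)
    case 0 then show ?thesis using v0 s_0 by simp
  next
    case (Suc t') then show ?thesis using below[of t] that Inv_def by simp
  qed
  have steps: "\<forall>t<N. lh_step n M q (s t) (s (Suc t))"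
    using lh_step_valid Vb s_Suc by simp
  have nfl: "\<forall>t. 0 < t \<and> t < N \<longrightarrow> \<not> fully_labeled n (fst (s t))"
    using below Inv_not_fl by (simp add: Suc_le_eq)
  have final: "fully_labeled n (fst (s N)) \<and> basis (fst (s N)) \<and> fst (s N) \<noteq> all_blue n"
  proof (cases "N = 1")
    case True
    then show ?thesis using first N s1 bB1 by auto
  next
    case False
    then obtain p where p: "N = Suc p" "1 \<le> p" using N by (cases N) auto
    have Ip: "Inv (s p)" using below p by simp
    have vp: "valid (s p)" using Ip Inv_def by simp
    have sN: "s N = nxt (s p)" using p s_Suc by simp
    have fl: "fst (ee (fst (s p)) (snd (s p))) = js \<and> fully_labeled n (fst (s N))"
      using Inv_step[OF Ip] N sN by auto
    have bN: "basis (fst (s N))" using R_valid[OF vp] sN unfolding nxt_tw tw_def valid_def by simp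
    have "fst (s N) \<noteq> all_blue n"
    proof
      assume AB: "fst (s N) = all_blue n"
      let ?e = "ee (fst (s p)) (snd (s p))"
      have vR: "valid (R (s p))" using R_valid[OF vp] by simp
      have RE: "R (s p) = (fst (s N), ?e)" unfolding sN nxt_def R_def by simp
      have "?e \<notin> all_blue n" using vR AB unfolding RE valid_def by simp
      then have "?e = (js, Red)" using fl
        by (cases ?e; cases "snd ?e") (auto simp: all_blue_def js)
      then have R0: "R (s p) = s 0" using RE AB s_0 s0_def by simp
      have Vp: "valid (s t)" if "t \<le> p" for t using Vb that p by simp
      have refl: "R (s (p - t)) = s t" if "t \<le> p" for t
        using that
      proof (induction t)
        case 0 then show ?case using R0 by simp
      next
        case (Suc t)
        then have IH: "R (s (p - t)) = s t" by simp
        have a1: "s (p - t) = R (s t)" using R_valid[OF Vp[of "p - t"]] IH by (metis diff_le_self)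
        have a2: "p - t = Suc (p - Suc t)" using Suc.prems by simp
        have "s (Suc t) = tw (R (s t))" using s_Suc nxt_tw by simp
        also have "\<dots> = tw (s (p - t))" using a1 by simp
        also have "\<dots> = tw (tw (R (s (p - Suc t))))" using a2 s_Suc nxt_tw by metis
        also have "\<dots> = R (s (p - Suc t))" by (simp add: tw_tw)
        finally show ?case by simp
      qed
      show False
      proof (cases "even p")
        case True
        then obtain m where m: "p = 2 * m" by blast
        have "R (s m) = s m" using refl[of m] m by simp
        then show False using R_fst[OF Vp[of m]] m by simp
      next
        case False
        then obtain m where m: "p = 2 * m + 1" using oddE by blast
        have "R (s (Suc m)) = s m" using refl[of m] m by simp
        then have "s (Suc m) = R (s m)" using R_valid[OF Vp[of "Suc m"]] m by (metis le_add2 Suc_eq_plus1 mult_2 add_le_mono le_refl add.commute trans_le_add2)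
        moreover have "s (Suc m) = tw (R (s m))" using s_Suc nxt_tw by simp
        ultimately have "tw (R (s m)) = R (s m)" by simp
        then show False unfolding tw_def using twin_ne by (metis snd_conv)
      qed
    qed
    then show ?thesis using fl bN by simp
  qed
  show ?thesis
    apply (rule exI[of _ N], rule exI[of _ s])
    using N steps nfl final s_0 s0_def by auto
qed

end

theorem proposition5p1:
  fixes n :: nat and M :: "nat \<Rightarrow> nat \<Rightarrow> ereal" and q :: "nat \<Rightarrow> real" and jstar :: nat
  assumes "tnecp_instance n M q"
    and "nondegenerate n M q"
    and "jstar < n"
  shows "\<exists>(N::nat) (s :: nat \<Rightarrow> col set \<times> col).
           0 < N \<and>
           s 0 = (all_blue n, (jstar, Red)) \<and>
           (\<forall>t<N. lh_step n M q (s t) (s (Suc t))) \<and>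
           (\<forall>t. 0 < t \<and> t < N \<longrightarrow> \<not> fully_labeled n (fst (s t))) \<and>
           fully_labeled n (fst (s N)) \<and>
           tropical_basis n M q (fst (s N)) \<and>
           fst (s N) \<noteq> all_blue n"
proof -
  interpret lh n M q jstar using assms by unfold_locales
  show ?thesis by (rule main)
qed

end
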